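(* Let $S$ be a numerical semigroup, let $\Lambda\subseteq\mathrm{IBetti}(S)$ and let $s\in S\setminus\Lambda$. Then $\mathrm B(s;\Lambda)\subseteq\mathrm Z(s)\setminus\mathrm I_b(S)$. Moreover, if $\{b\in\mathrm{IBetti}(S): b<_S s\}\subseteq\Lambda$, then $\mathrm B(s;\Lambda)=\mathrm Z(s)\setminus\mathrm I_b(S)$.
   Context: A numerical semigroup $S$ is a submonoid of $(\mathbb N,+)$ with finite complement, minimally generated by $\{n_1,\dots,n_e\}$. Write $a\le_S b$ if $b-a\in S$, and $a<_S b$ if moreover $a\ne b$. Let $\varphi:\mathbb N^e\to S$, $\varphi(a)=\sum_ia_in_i$; for $s\in S$, $\mathrm Z(s)=\varphi^{-1}(s)$. $\nabla_s$ is the graph on $\mathrm Z(s)$ with distinct $x,y$ adjacent iff $x\cdot y\neq0$; $s$ is a Betti element if $\nabla_s$ is disconnected; $\mathrm{Betti}(S)$ is the set of Betti elements. A factorization $z\in\mathrm Z(s)$ is isolated if $z\cdot x=0$ for all $x\in\mathrm Z(s)\setminus\{z\}$; $\mathrm I(s)$ is the set of isolated factorizations of $s$ and, for $\Lambda\subseteq S$, $\mathrm I(\Lambda)=\bigcup_{t\in\Lambda}\mathrm I(t)$. $\mathrm I_s(S)$ is the set of $z\in\mathbb N^e$ such that $\varphi(z)$ has exactly one factorization; $\mathrm I_b(S)=\bigcup_{b\in\mathrm{Betti}(S)}\mathrm I(b)$. $\mathrm{IBetti}(S)$ is the set of Betti elements $b$ with $\mathrm I(b)\ne\emptyset$. For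 $\Lambda\subseteq S$ and $s\in S$, the set of Betti restricted factorizations is $\mathrm B(s;\Lambda)=\{w+x_1+\cdots+x_l\in\mathrm Z(s): w\in\mathrm I_s(S),\ l\ge0,\ x_1,\dots,x_l\in\mathrm I(\Lambda)\}$. *)

theory Defs
  imports Main
begin

text \<open>Factorizations are elements of N^e, represented as lists of length e = length ns,
  where ns = [n_1, ..., n_e] is the list of minimal generators.\<close>

definition numerical_semigroup :: "nat set \<Rightarrow> bool" where
  "numerical_semigroup S \<longleftrightarrow> 0 \<in> S \<and> (\<forall>a\<in>S. \<forall>b\<in>S. a + b \<in> S) \<and> finite (UNIV - S)"

definition facts :: "nat list \<Rightarrow> nat list set" where
  "facts ns = {a. length a = length ns}"

definition phi :: "nat list \<Rightarrow> nat list \<Rightarrow> nat" where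
  "phi ns a = (\<Sum>i<length ns. a ! i * ns ! i)"

definition generated :: "nat list \<Rightarrow> nat set" where
  "generated ns = phi ns ` facts ns"

definition minimally_generates :: "nat set \<Rightarrow> nat list \<Rightarrow> bool" where
  "minimally_generates S ns \<longleftrightarrow> distinct ns \<and> S = generated ns \<and>
     (\<forall>ms. set ms \<subset> set ns \<longrightarrow> generated ms \<noteq> S)"

definition le_S :: "nat set \<Rightarrow> nat \<Rightarrow> nat \<Rightarrow> bool" where
  "le_S S a b \<longleftrightarrow> a \<le> b \<and> b - a \<in> S"

definition lt_S :: "nat set \<Rightarrow> nat \<Rightarrow> nat \<Rightarrow> bool" where
  "lt_S S a b \<longleftrightarrow> le_S S a b \<and> a \<noteq> b"

definition Z :: "nat list \<Rightarrow> nat \<Rightarrow> nat list set" where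
  "Z ns s = {a \<in> facts ns. phi ns a = s}"

definition dotp :: "nat list \<Rightarrow> nat list \<Rightarrow> nat" where
  "dotp x y = (\<Sum>i<min (length x) (length y). x ! i * y ! i)"

definition vadd :: "nat list \<Rightarrow> nat list \<Rightarrow> nat list" where
  "vadd x y = map2 (+) x y"

definition nabla_edges :: "nat list \<Rightarrow> nat \<Rightarrow> (nat list \<times> nat list) set" where
  "nabla_edges ns s = {(x, y). x \<in> Z ns s \<and> y \<in> Z ns s \<and> x \<noteq> y \<and> dotp x y \<noteq> 0}"

definition nabla_connected :: "nat list \<Rightarrow> nat \<Rightarrow> bool" where
  "nabla_connected ns s \<longleftrightarrow> (\<forall>x\<in>Z ns s. \<forall>y\<in>Z ns s. (x, y) \<in> (nabla_edges ns s)\<^sup>*)"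

definition Betti :: "nat list \<Rightarrow> nat set" where
  "Betti ns = {b \<in> generated ns. \<not> nabla_connected ns b}"

definition Iso :: "nat list \<Rightarrow> nat \<Rightarrow> nat list set" where
  "Iso ns s = {z \<in> Z ns s. \<forall>x \<in> Z ns s - {z}. dotp z x = 0}"

definition IsoSet :: "nat list \<Rightarrow> nat set \<Rightarrow> nat list set" where
  "IsoSet ns L = (\<Union>t\<in>L. Iso ns t)"

definition I_s :: "nat list \<Rightarrow> nat list set" where
  "I_s ns = {z \<in> facts ns. Z ns (phi ns z) = {z}}"

definition I_b :: "nat list \<Rightarrow> nat list set" where
  "I_b ns = (\<Union>b\<in>Betti ns. Iso ns b)"

definition IBetti :: "nat list \<Rightarrow> nat set" where
  "IBetti ns = {b \<in> Betti ns. Iso ns b \<noteq> {}}"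

definition Bres :: "nat list \<Rightarrow> nat \<Rightarrow> nat set \<Rightarrow> nat list set" where
  "Bres ns s L = {y \<in> Z ns s. \<exists>w \<in> I_s ns. \<exists>xs. set xs \<subseteq> IsoSet ns L \<and>
      y = foldr vadd xs w}"

end

theory Submission
  imports Defs
begin

definition lev :: "nat list \<Rightarrow> nat list \<Rightarrow> bool" where
  "lev x y \<longleftrightarrow> length x = length y \<and> (\<forall>i<length x. x!i \<le> y!i)"

definition vsub :: "nat list \<Rightarrow> nat list \<Rightarrow> nat list" where
  "vsub x y = map2 (-) x y"

lemma length_vadd[simp]: "length (vadd x y) = min (length x) (length y)"
  by (simp add: vadd_def)
lemma nth_vadd[simp]: "i < length x \<Longrightarrow> i < length y \<Longrightarrow> vadd x y ! i = x!i + y!i"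
  by (simp add: vadd_def)
lemma length_vsub[simp]: "length (vsub x y) = min (length x) (length y)"
  by (simp add: vsub_def)
lemma nth_vsub[simp]: "i < length x \<Longrightarrow> i < length y \<Longrightarrow> vsub x y ! i = x!i - y!i"
  by (simp add: vsub_def)

lemma phi_vadd:
  assumes "length x = length ns" "length y = length ns"
  shows "phi ns (vadd x y) = phi ns x + phi ns y"
  unfolding phi_def sum.distrib[symmetric] by (rule sum.cong) (auto simp: assms algebra_simps)

lemma vadd_vsub: "lev x z \<Longrightarrow> vadd x (vsub z x) = z"
  by (auto simp: lev_def intro!: nth_equalityI)

lemma phi_lev: "lev x z \<Longrightarrow> length z = length ns \<Longrightarrow> phi ns z = phi ns x + phi ns (vsub z x)"
  using phi_vadd[of x ns "vsub z x"] vadd_vsub[of x z] by (auto simp: lev_def)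

lemma phi_zero:
  assumes "\<forall>i<length ns. ns!i>0" "length a = length ns" "phi ns a = 0"
  shows "\<forall>i<length a. a!i = 0"
  using assms by (fastforce simp: phi_def)

lemma dotp_nz: "length x = length y \<Longrightarrow> dotp x y \<noteq> 0 \<longleftrightarrow> (\<exists>i<length x. 0 < x!i \<and> 0 < y!i)"
  by (auto simp: dotp_def)

lemma length_foldr: "\<forall>x\<in>set xs. length x = n \<Longrightarrow> length w = n \<Longrightarrow> length (foldr vadd xs w) = n"
  by (induction xs) auto

lemma lev_foldr: "\<forall>x\<in>set xs. length x = n \<Longrightarrow> length w = n \<Longrightarrow> x \<in> set xs \<Longrightarrow> lev x (foldr vadd xs w)"
proof (induction xs)
  case Nil then show ?case by simp
next
  case (Cons a xs)
  have l: "length (foldr vadd xs w) = n" using Cons.prems by (intro length_foldr) auto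
  show ?case
  proof (cases "x = a")
    case True then show ?thesis using Cons.prems l by (auto simp: lev_def)
  next
    case False
    then have "lev x (foldr vadd xs w)" using Cons by auto
    then show ?thesis using Cons.prems l by (auto simp: lev_def intro: le_trans)
  qed
qed

lemma phi_dec:
  assumes "i < length ns" "length u = length ns" "0 < u!i"
  shows "phi ns (u[i := u!i - 1]) + ns!i = phi ns u"
proof -
  have r: "\<And>a. phi ns a = a!i*ns!i + (\<Sum>j\<in>{..<length ns}-{i}. a!j*ns!j)"
    unfolding phi_def using assms(1) by (subst sum.remove[of _ i]) auto
  have "(\<Sum>j\<in>{..<length ns}-{i}. u[i := u!i - 1]!j*ns!j) = (\<Sum>j\<in>{..<length ns}-{i}. u!j*ns!j)"
    by (rule sum.cong) auto
  moreover obtain k where "u!i = Suc k" using assms(3) gr0_conv_Suc by blast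
  ultimately show ?thesis using r[of u] r[of "u[i := u!i - 1]"] assms by simp
qed

lemma phi_Cons: "phi (n#ns) (k#a) = k*n + phi ns a"
  unfolding phi_def by (simp only: length_Cons sum.lessThan_Suc_shift) simp

lemma generated_Cons: "generated (n#ns) = {k*n + y | k y. y \<in> generated ns}"
proof safe
  fix x assume "x \<in> generated (n#ns)"
  then obtain a where a: "length a = Suc (length ns)" "x = phi (n#ns) a"
    by (auto simp: generated_def facts_def)
  then obtain k a' where "a = k#a'" by (cases a) auto
  then show "\<exists>k y. x = k*n + y \<and> y \<in> generated ns"
    using a phi_Cons by (auto simp: generated_def facts_def)
next
  fix k y assume "y \<in> generated ns"
  then obtain a where a: "length a = length ns" "y = phi ns a"
    by (auto simp: generated_def facts_def)
  then show "k*n + y \<in> generated (n#ns)"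
    unfolding generated_def facts_def
    by (intro image_eqI[of _ _ "k#a"]) (auto simp: phi_Cons)
qed

lemma gen_removeAll: "generated (removeAll 0 ns) = generated ns"
  by (induction ns) (auto simp: generated_Cons)

lemma pos_gens:
  assumes "minimally_generates S ns"
  shows "\<forall>i<length ns. 0 < ns!i"
proof (rule ccontr)
  assume "\<not> ?thesis"
  then have "0 \<in> set ns" by (metis gr0I nth_mem)
  then have "set (removeAll 0 ns) \<subset> set ns" by auto
  then show False using assms gen_removeAll[of ns] unfolding minimally_generates_def by blast
qed


lemma iso_not_connected:
  assumes "u \<in> Iso ns t" "u' \<in> Z ns t" "u' \<noteq> u"
  shows "\<not> nabla_connected ns t"
proof
  assume c: "nabla_connected ns t"
  have uZ: "u \<in> Z ns t" using assms(1) unfolding Iso_def by blast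
  have "(u, u') \<in> (nabla_edges ns t)\<^sup>*" using c uZ assms(2) unfolding nabla_connected_def by blast
  then obtain v where v: "(u, v) \<in> nabla_edges ns t"
    using assms(3) by (metis converse_rtranclE)
  then have "v \<in> Z ns t" "v \<noteq> u" "dotp u v \<noteq> 0" unfolding nabla_edges_def by auto
  moreover have "\<forall>x\<in>Z ns t - {u}. dotp u x = 0" using assms(1) unfolding Iso_def by blast
  ultimately show False by auto
qed

lemma zero_not_Betti:
  assumes pos: "\<forall>i<length ns. 0 < ns!i"
  shows "0 \<notin> Betti ns"
proof -
  have "\<And>x. x \<in> Z ns 0 \<Longrightarrow> x = replicate (length ns) 0"
  proof -
    fix x assume x: "x \<in> Z ns 0"
    then have lx: "length x = length ns" "phi ns x = 0" unfolding Z_def facts_def by auto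
    then have "\<forall>i<length x. x!i = 0" using phi_zero[OF pos] by blast
    then show "x = replicate (length ns) 0" using lx by (intro nth_equalityI) auto
  qed
  then have "nabla_connected ns 0" unfolding nabla_connected_def by (metis rtrancl.rtrancl_refl)
  then show ?thesis unfolding Betti_def by blast
qed

lemma extract_u:
  assumes pos: "\<forall>i<length ns. 0 < ns!i" and z: "z \<in> facts ns" "z \<notin> I_s ns"
  shows "\<exists>u. lev u z \<and> u \<in> Iso ns (phi ns u) \<and> phi ns u \<in> IBetti ns"
proof -
  define M where "M = {u \<in> facts ns. lev u z \<and> Z ns (phi ns u) \<noteq> {u}}"
  have "z \<in> M" using z by (auto simp: M_def I_s_def lev_def facts_def)
  obtain u where uM: "u \<in> M" and umin: "\<And>v. v \<in> M \<Longrightarrow> phi ns u \<le> phi ns v"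
    using ex_has_least_nat[of "\<lambda>v. v \<in> M" z "phi ns"] \<open>z\<in>M\<close> by blast
  have uZ: "u \<in> Z ns (phi ns u)" using uM by (auto simp: M_def Z_def)
  then obtain u' where u': "u' \<in> Z ns (phi ns u)" "u' \<noteq> u" using uM unfolding M_def by blast
  have lu: "length u = length ns" using uM by (auto simp: M_def facts_def)
  have luz: "lev u z" using uM by (auto simp: M_def)
  have iso: "u \<in> Iso ns (phi ns u)"
  proof -
    { fix x assume x: "x \<in> Z ns (phi ns u)" "x \<noteq> u" "dotp u x \<noteq> 0"
      have lx: "length x = length ns" using x by (auto simp: Z_def facts_def)
      then obtain i where i: "i < length ns" "0<u!i" "0<x!i" using dotp_nz[of u x] x lu by auto
      define u0 where "u0 = u[i := u!i - 1]"
      define x0 where "x0 = x[i := x!i - 1]"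
      have pu: "phi ns u0 + ns!i = phi ns u" unfolding u0_def using phi_dec i lu by blast
      have px: "phi ns x0 + ns!i = phi ns x" unfolding x0_def using phi_dec i lx by blast
      have eq: "phi ns x0 = phi ns u0" using pu px x by (simp add: Z_def)
      have ne: "x0 \<noteq> u0"
      proof
        assume "x0 = u0"
        then have "\<forall>j<length ns. x!j = u!j"
          using i lx lu unfolding x0_def u0_def
          by (metis (no_types, lifting) One_nat_def Suc_pred nth_list_update_eq nth_list_update_neq)
        then have "x = u" using lx lu by (auto intro: nth_equalityI)
        then show False using x by simp
      qed
      have "u0 \<in> M"
      proof -
        have "lev u0 z" using luz lu i unfolding lev_def u0_def
          by (metis diff_le_self le_trans length_list_update nth_list_update_eq nth_list_update_neq)
        moreover have "x0 \<in> Z ns (phi ns u0)" using eq lx by (auto simp: Z_def facts_def x0_def)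
        ultimately show ?thesis using ne lu by (auto simp: M_def facts_def u0_def)
      qed
      then have "phi ns u \<le> phi ns u0" by (rule umin)
      then have False using pu pos i by auto }
    then show ?thesis using uZ by (auto simp: Iso_def)
  qed
  have "phi ns u \<in> generated ns" using lu by (auto simp: generated_def facts_def)
  then have "phi ns u \<in> Betti ns" using iso_not_connected[OF iso u'] by (auto simp: Betti_def)
  then have "phi ns u \<in> IBetti ns" using iso unfolding IBetti_def by blast
  then show ?thesis using iso luz by blast
qed

lemma decomp:
  assumes pos: "\<forall>i<length ns. 0 < ns!i"
  shows "z \<in> facts ns \<Longrightarrow> \<exists>w\<in>I_s ns. \<exists>xs. set xs \<subseteq> IsoSet ns (IBetti ns) \<and> z = foldr vadd xs w"
proof (induction "phi ns z" arbitrary: z rule: less_induct)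
  case less
  show ?case
  proof (cases "z \<in> I_s ns")
    case True then show ?thesis by (intro bexI[of _ z] exI[of _ "[]"]) auto
  next
    case False
    obtain u where u: "lev u z" "u \<in> Iso ns (phi ns u)" "phi ns u \<in> IBetti ns"
      using extract_u[OF pos less.prems False] by blast
    have "phi ns u \<noteq> 0" using u(3) zero_not_Betti[OF pos] by (auto simp: IBetti_def)
    moreover have lz: "length z = length ns" using less.prems by (simp add: facts_def)
    ultimately have "phi ns (vsub z u) < phi ns z" using phi_lev[OF u(1)] by simp
    moreover have "vsub z u \<in> facts ns" using u(1) lz by (auto simp: facts_def lev_def)
    ultimately obtain w xs where w: "w \<in> I_s ns" "set xs \<subseteq> IsoSet ns (IBetti ns)" "vsub z u = foldr vadd xs w"
      using less.hyps[of "vsub z u"] by blast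
    have "z = foldr vadd (u#xs) w" using vadd_vsub[OF u(1)] w(3) by simp
    moreover have "u \<in> IsoSet ns (IBetti ns)" using u by (auto simp: IsoSet_def)
    ultimately show ?thesis using w by (intro bexI[of _ w] exI[of _ "u#xs"]) auto
  qed
qed


lemma isoset_len: "x \<in> IsoSet ns A \<Longrightarrow> length x = length ns \<and> x \<in> Iso ns (phi ns x)"
  by (auto simp: IsoSet_def Iso_def Z_def facts_def)

theorem lemma5p4:
  fixes S :: "nat set" and ns :: "nat list" and L :: "nat set" and s :: nat
  assumes "numerical_semigroup S"
    and "minimally_generates S ns"
    and "L \<subseteq> IBetti ns"
    and "s \<in> S" and "s \<notin> L"
  shows "Bres ns s L \<subseteq> Z ns s - I_b ns \<and>
    ({b \<in> IBetti ns. lt_S S b s} \<subseteq> L \<longrightarrow> Bres ns s L = Z ns s - I_b ns)"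
proof -
  have Sg: "S = generated ns" using assms(2) by (simp add: minimally_generates_def)
  have pos: "\<forall>i<length ns. 0 < ns!i" using pos_gens[OF assms(2)] .
  have part1: "Bres ns s L \<subseteq> Z ns s - I_b ns"
  proof
    fix y assume yB: "y \<in> Bres ns s L"
    then obtain w xs where y: "y \<in> Z ns s" "w \<in> I_s ns" "set xs \<subseteq> IsoSet ns L" "y = foldr vadd xs w"
      by (auto simp: Bres_def)
    have ly: "length y = length ns" using y by (simp add: Z_def facts_def)
    have lw: "length w = length ns" using y by (simp add: I_s_def facts_def)
    have lxs: "\<forall>x\<in>set xs. length x = length ns" using y(3) isoset_len by blast
    have "y \<notin> I_b ns"
    proof
      assume "y \<in> I_b ns"
      then obtain b where b: "b \<in> Betti ns" "y \<in> Iso ns b" by (auto simp: I_b_def)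
      then have "b = s" using y(1) by (auto simp: Iso_def Z_def)
      with b have sB: "s \<in> Betti ns" and yI: "y \<in> Iso ns s" by auto
      show False
      proof (cases xs)
        case Nil
        then have "y = w" using y by simp
        then have "Z ns s = {y}" using y by (auto simp: I_s_def Z_def)
        then have "nabla_connected ns s" by (auto simp: nabla_connected_def)
        then show False using sB by (auto simp: Betti_def)
      next
        case (Cons x1 rest)
        then obtain t where t: "t \<in> L" "x1 \<in> Iso ns t" using y(3) by (auto simp: IsoSet_def)
        then have tB: "t \<in> Betti ns" using assms(3) by (auto simp: IBetti_def)
        have "\<exists>x'\<in>Z ns t. x' \<noteq> x1"
        proof (rule ccontr)
          assume "\<not> ?thesis"
          then have "\<forall>x\<in>Z ns t. x = x1" by blast
          then have "nabla_connected ns t" unfolding nabla_connected_def by (metis rtrancl.rtrancl_refl)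
          then show False using tB by (auto simp: Betti_def)
        qed
        then obtain x' where x': "x' \<in> Z ns t" "x' \<noteq> x1" by blast
        define r where "r = foldr vadd rest w"
        have lr: "length r = length ns" unfolding r_def using lxs lw Cons by (intro length_foldr) auto
        have lx1: "length x1 = length ns" using lxs Cons by auto
        have lx': "length x' = length ns" using x' by (simp add: Z_def facts_def)
        have yeq: "y = vadd x1 r" using y(4) Cons r_def by simp
        define y' where "y' = vadd x' r"
        have "phi ns y' = phi ns y"
          using phi_vadd[OF lx' lr] phi_vadd[OF lx1 lr] yeq x' t(2) y'_def
          by (simp add: Iso_def Z_def)
        then have y'Z: "y' \<in> Z ns s" using y(1) lx' lr by (auto simp: Z_def facts_def y'_def)
        have "y' \<noteq> y"
        proof
          assume "y' = y"
          have "\<forall>i<length ns. x'!i = x1!i"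
          proof (intro allI impI)
            fix i assume i: "i < length ns"
            have "y'!i = y!i" using \<open>y' = y\<close> by simp
            then show "x'!i = x1!i" using i yeq lx' lx1 lr by (simp add: y'_def)
          qed
          then have "x' = x1" using lx' lx1 by (auto intro: nth_equalityI)
          then show False using x' by simp
        qed
        then have "dotp y y' = 0" using yI y'Z by (auto simp: Iso_def)
        then have dz: "\<forall>i<length ns. y!i = 0 \<or> y'!i = 0" using dotp_nz[of y y'] ly lr lx'
          by (auto simp: y'_def)
        have "\<forall>i<length ns. r!i = 0"
        proof (intro allI impI)
          fix i assume i: "i < length ns"
          have "y!i = x1!i + r!i" "y'!i = x'!i + r!i" using i yeq lr lx1 lx' by (simp_all add: y'_def)
          then show "r!i = 0" using dz i by auto
        qed
        then have "y = x1" using yeq lr lx1 by (auto intro: nth_equalityI)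
        then have "s = t" using yI t(2) by (auto simp: Iso_def Z_def)
        then show False using t(1) assms(5) by simp
      qed
    qed
    then show "y \<in> Z ns s - I_b ns" using y by simp
  qed
  have part2: "Z ns s - I_b ns \<subseteq> Bres ns s L" if H: "{b \<in> IBetti ns. lt_S S b s} \<subseteq> L"
  proof
    fix z assume zZ: "z \<in> Z ns s - I_b ns"
    have lz: "length z = length ns" and pz: "phi ns z = s" using zZ by (auto simp: Z_def facts_def)
    show "z \<in> Bres ns s L"
    proof (cases "z \<in> I_s ns")
      case True then show ?thesis using zZ unfolding Bres_def
        by (intro CollectI conjI bexI[of _ z] exI[of _ "[]"]) auto
    next
      case False
      obtain u where u: "lev u z" "u \<in> Iso ns (phi ns u)" "phi ns u \<in> IBetti ns"
        using extract_u[OF pos _ False] lz by (auto simp: facts_def)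
      define t where "t = phi ns u"
      define r where "r = vsub z u"
      have t0: "t \<noteq> 0" using u(3) zero_not_Betti[OF pos] by (auto simp: IBetti_def t_def)
      have lr: "length r = length ns" using u(1) lz by (auto simp: r_def lev_def)
      have st: "s = t + phi ns r" using phi_lev[OF u(1) lz] pz by (simp add: t_def r_def)
      have "t \<noteq> s"
      proof
        assume "t = s"
        then have "phi ns r = 0" using st by simp
        then have "\<forall>i<length r. r!i = 0" using phi_zero[OF pos lr] by blast
        then have r0: "\<forall>i<length ns. z!i - u!i = 0" using lr lz u(1) by (auto simp: r_def lev_def)
        have "z = u"
        proof (rule nth_equalityI)
          show "length z = length u" using u(1) by (simp add: lev_def)
          fix i assume "i < length z"
          then show "z!i = u!i" using r0 u(1) lz unfolding lev_def by (metis diff_is_0_eq le_antisym)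
        qed
        then have "z \<in> I_b ns" using u \<open>t = s\<close> pz by (auto simp: I_b_def IBetti_def t_def)
        then show False using zZ by simp
      qed
      moreover have "phi ns r \<in> S" using lr Sg by (auto simp: generated_def facts_def)
      ultimately have "lt_S S t s" using st by (auto simp: lt_S_def le_S_def)
      then have tL: "t \<in> L" using H u(3) t_def by auto
      obtain w xs where w: "w \<in> I_s ns" "set xs \<subseteq> IsoSet ns (IBetti ns)" "r = foldr vadd xs w"
        using decomp[OF pos, of r] lr by (auto simp: facts_def)
      have lw: "length w = length ns" using w by (simp add: I_s_def facts_def)
      have lxs: "\<forall>x\<in>set xs. length x = length ns" using w(2) isoset_len by blast
      have "set xs \<subseteq> IsoSet ns L"
      proof
        fix x assume x: "x \<in> set xs"
        obtain t' where t': "t' \<in> IBetti ns" "x \<in> Iso ns t'" using w(2) x unfolding IsoSet_def by blast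
        then have "phi ns x = t'" unfolding Iso_def Z_def by blast
        then have xI: "x \<in> Iso ns (phi ns x)" "phi ns x \<in> IBetti ns" using t' by auto
        have lx: "lev x r" using lev_foldr[OF lxs lw x] w(3) by simp
        have pr: "phi ns r = phi ns x + phi ns (vsub r x)" using phi_lev[OF lx lr] .
        have lv: "length (vsub r x) = length ns" using lx lr by (simp add: lev_def)
        have "s - phi ns x = phi ns (vadd u (vsub r x))"
          using phi_vadd[of u ns "vsub r x"] u(1) lz lv st pr by (auto simp: lev_def t_def)
        then have "s - phi ns x \<in> S" using Sg lv u(1) lz by (auto simp: generated_def facts_def lev_def)
        moreover have "phi ns x \<le> s" "phi ns x \<noteq> s" using st pr t0 by auto
        ultimately have "lt_S S (phi ns x) s" by (auto simp: lt_S_def le_S_def)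
        then have "phi ns x \<in> L" using H xI by auto
        then show "x \<in> IsoSet ns L" using xI by (auto simp: IsoSet_def)
      qed
      moreover have "u \<in> IsoSet ns L" using u tL by (auto simp: IsoSet_def t_def)
      moreover have "z = foldr vadd (u#xs) w" using vadd_vsub[OF u(1)] w(3) by (simp add: r_def)
      ultimately show ?thesis using zZ w(1) unfolding Bres_def
        by (intro CollectI conjI bexI[of _ w] exI[of _ "u#xs"]) auto
    qed
  qed
  show ?thesis using part1 part2 by blast
qed

end
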